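(* Let $n,k,r\in\mathbb{N}$ with $n\ge 2k\ge 2r$. For any harmonic multilinear polynomial $P\in\mathbb{R}[x_1,\ldots,x_n]$, \[ \|P^{=r}\|^2\le 4^r\binom{k}{r}\,(W^r(P))^2. \]
   Context: A multilinear polynomial $P\in\mathbb{R}[x_1,\ldots,x_n]$ is harmonic if $\sum_{i=1}^n\partial P/\partial x_i=0$. $P^{=r}$ denotes the homogeneous degree-$r$ component of $P$. $\operatorname{Slice}(n,k)\subseteq\{0,1\}^n$ is the set of vectors with exactly $k$ ones; for functions $f,g$ on it, $\langle f,g\rangle=\mathbb{E}_{\sigma\sim\operatorname{Slice}(n,k)}[f(\sigma)g(\sigma)]$ (uniform measure) and $\|f\|=\sqrt{\langle f,f\rangle}$; polynomials are viewed as functions on $\operatorname{Slice}(n,k)$. $\operatorname{Slice}(n,k)$ is identified with $\binom{[n]}{k}$ via $\sigma\mapsto\{i:\sigma_i=1\}$, so $P$ defines a function on $\binom{[n]}{k}$. For $f\colon\binom{[n]}{k}\to\mathbb{R}$ and $r\le k$ with $n\ge 2k$, the level-$r$ weight is \[ W^r(f)=\left(\mathbb{E}_{(a_1,b_1,\ldots,a_r,b_r)}\Big(\mathbb{E}_{R}\,(-1)^{|R\cap\{b_1,\ldots,b_r\}|}f(R)\Big)^2\right)^{1/2}, \] where $(a_1,b_1,\ldots,a_r,b_r)$ is a uniformly random sequence of $2r$ distinct elements of $[n]$, and, given it, $R$ is a uniformly random $k$-subset of $[n]$ with $|R\cap\{a_i,b_i\}|=1$ for each $i\in[r]$. *)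

theory Defs
  imports Complex_Main
begin

text \<open>A multilinear polynomial in x_0,...,x_{n-1} is represented by its coefficient
  function c :: nat set => real; only the coefficients c S with S a subset of {..<n} matter:
  P(x) = sum over S subset of {..<n} of c S * prod_{i in S} x_i.\<close>

definition mlpoly_eval :: "nat \<Rightarrow> (nat set \<Rightarrow> real) \<Rightarrow> (nat \<Rightarrow> real) \<Rightarrow> real" where
  "mlpoly_eval n c x = (\<Sum>S\<in>Pow {..<n}. c S * (\<Prod>i\<in>S. x i))"

definition mlpoly_deriv :: "nat \<Rightarrow> (nat set \<Rightarrow> real) \<Rightarrow> (nat set \<Rightarrow> real)" where
  "mlpoly_deriv i c = (\<lambda>T. if i \<notin> T then c (insert i T) else 0)"

definition harmonic :: "nat \<Rightarrow> (nat set \<Rightarrow> real) \<Rightarrow> bool" where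
  "harmonic n c \<longleftrightarrow> (\<forall>T\<in>Pow {..<n}. (\<Sum>i<n. mlpoly_deriv i c T) = 0)"

definition hom_part :: "nat \<Rightarrow> (nat set \<Rightarrow> real) \<Rightarrow> (nat set \<Rightarrow> real)" where
  "hom_part r c = (\<lambda>S. if card S = r then c S else 0)"

definition slice :: "nat \<Rightarrow> nat \<Rightarrow> nat set set" where
  "slice n k = {R. R \<subseteq> {..<n} \<and> card R = k}"

definition poly_on_slice :: "nat \<Rightarrow> (nat set \<Rightarrow> real) \<Rightarrow> nat set \<Rightarrow> real" where
  "poly_on_slice n c R = mlpoly_eval n c (\<lambda>i. if i \<in> R then 1 else 0)"

definition slice_norm_sq :: "nat \<Rightarrow> nat \<Rightarrow> (nat set \<Rightarrow> real) \<Rightarrow> real" where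
  "slice_norm_sq n k f = (\<Sum>R\<in>slice n k. (f R)\<^sup>2) / real (card (slice n k))"

text \<open>Sequences (a_1,b_1,...,a_r,b_r) of 2r distinct elements of {..<n}, as lists;
  a_i = xs!(2i), b_i = xs!(2i+1) for i < r.\<close>
definition pair_seqs :: "nat \<Rightarrow> nat \<Rightarrow> nat list set" where
  "pair_seqs n r = {xs. length xs = 2 * r \<and> distinct xs \<and> set xs \<subseteq> {..<n}}"

definition compatible_sets :: "nat \<Rightarrow> nat \<Rightarrow> nat \<Rightarrow> nat list \<Rightarrow> nat set set" where
  "compatible_sets n k r xs =
     {R \<in> slice n k. \<forall>i<r. card (R \<inter> {xs ! (2*i), xs ! (2*i+1)}) = 1}"

definition level_weight :: "nat \<Rightarrow> nat \<Rightarrow> nat \<Rightarrow> (nat set \<Rightarrow> real) \<Rightarrow> real" where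
  "level_weight n k r f =
     sqrt ((\<Sum>xs\<in>pair_seqs n r.
        ((\<Sum>R\<in>compatible_sets n k r xs.
            (-1) ^ card (R \<inter> {xs ! (2*i+1) | i. i < r}) * f R)
          / real (card (compatible_sets n k r xs)))\<^sup>2)
      / real (card (pair_seqs n r)))"

end

theory Submission
  imports Defs
begin

definition sub :: "nat set \<Rightarrow> nat \<Rightarrow> nat set set" where
  "sub R w = {T. T \<subseteq> R \<and> card T = w}"

definition harmX :: "nat set \<Rightarrow> (nat set \<Rightarrow> real) \<Rightarrow> bool" where
  "harmX X c \<longleftrightarrow> (\<forall>T. T \<subseteq> X \<longrightarrow> (\<Sum>i\<in>X - T. c (insert i T)) = 0)"

definition G :: "nat \<Rightarrow> (nat set \<Rightarrow> real) \<Rightarrow> nat set \<Rightarrow> real" where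
  "G w c R = (\<Sum>S\<in>sub R w. c S)"

definition F :: "(nat set \<Rightarrow> real) \<Rightarrow> nat set \<Rightarrow> real" where
  "F c R = (\<Sum>S\<in>Pow R. c S)"

lemma finite_sub[simp]: "finite R \<Longrightarrow> finite (sub R w)"
  unfolding sub_def by (rule finite_subset[of _ "Pow R"]) auto

lemma DC:
  assumes "finite R"
  shows "(\<Sum>T\<in>sub R w. \<Sum>i\<in>R - T. h (insert i T)) = real (Suc w) * (\<Sum>S\<in>sub R (Suc w). h S)"
proof -
  have "(\<Sum>T\<in>sub R w. \<Sum>i\<in>R - T. h (insert i T)) = (\<Sum>(T,i)\<in>(SIGMA T:sub R w. R - T). h (insert i T))"
    by (rule sum.Sigma) (use assms in auto)
  also have "\<dots> = (\<Sum>(S,i)\<in>(SIGMA S:sub R (Suc w). S). h S)"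
    apply (rule sum.reindex_bij_witness[where j = "\<lambda>(T,i). (insert i T, i)" and i = "\<lambda>(S,i). (S - {i}, i)"])
    using assms by (auto simp: sub_def finite_subset card_Diff_singleton insert_absorb card_insert_if)
  also have "\<dots> = (\<Sum>S\<in>sub R (Suc w). \<Sum>i\<in>S. h S)"
    by (rule sum.Sigma[symmetric]) (use assms in \<open>auto simp: sub_def finite_subset\<close>)
  also have "\<dots> = (\<Sum>S\<in>sub R (Suc w). real (Suc w) * h S)"
    by (rule sum.cong) (auto simp: sub_def)
  finally show ?thesis by (simp add: sum_distrib_left)
qed

lemma SW:
  assumes "finite R"
  shows "(\<Sum>u\<in>R. \<Sum>T\<in>sub (R - {u}) w. g u T) = (\<Sum>T\<in>sub R w. \<Sum>u\<in>R - T. g u T)"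
proof -
  have "(\<Sum>u\<in>R. \<Sum>T\<in>sub (R - {u}) w. g u T) = (\<Sum>u\<in>R. \<Sum>T\<in>{T. T \<in> sub R w \<and> u \<notin> T}. g u T)"
    by (rule sum.cong) (auto simp: sub_def intro!: sum.cong)
  also have "\<dots> = (\<Sum>T\<in>sub R w. \<Sum>u\<in>{u. u \<in> R \<and> u \<notin> T}. g u T)"
    by (rule sum.swap_restrict) (use assms in auto)
  also have "\<dots> = (\<Sum>T\<in>sub R w. \<Sum>u\<in>R - T. g u T)"
    by (rule sum.cong) (auto intro!: sum.cong)
  finally show ?thesis .
qed

lemma harm_level:
  assumes "finite X" "harmX X c"
  shows "(\<Sum>S\<in>sub X (Suc w). c S) = 0"
proof -
  have "(\<Sum>T\<in>sub X w. \<Sum>i\<in>X - T. c (insert i T)) = 0"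
    using assms(2) by (auto simp: harmX_def sub_def intro!: sum.neutral)
  with DC[OF assms(1), where w=w and h=c] show ?thesis by simp
qed

fun Bs :: "nat list \<Rightarrow> nat set" where
  "Bs (a#b#ys) = insert b (Bs ys)"
| "Bs _ = {}"

fun cmp :: "nat list \<Rightarrow> nat set \<Rightarrow> bool" where
  "cmp (a#b#ys) R = (card (R \<inter> {a,b}) = 1 \<and> cmp ys R)"
| "cmp _ R = True"

definition dd :: "nat \<Rightarrow> nat \<Rightarrow> (nat set \<Rightarrow> real) \<Rightarrow> nat set \<Rightarrow> real" where
  "dd a b c = (\<lambda>T. c (insert a T) - c (insert b T))"

fun D :: "(nat set \<Rightarrow> real) \<Rightarrow> nat list \<Rightarrow> real" where
  "D c (a#b#ys) = D (dd a b c) ys"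
| "D c _ = c {}"

definition psx :: "nat set \<Rightarrow> nat \<Rightarrow> nat list set" where
  "psx X r = {xs. length xs = 2 * r \<and> distinct xs \<and> set xs \<subseteq> X}"

definition comps :: "nat set \<Rightarrow> nat \<Rightarrow> nat list \<Rightarrow> nat set set" where
  "comps X k xs = {R. R \<subseteq> X \<and> card R = k \<and> cmp xs R}"

definition sgnl :: "nat list \<Rightarrow> nat set \<Rightarrow> real" where
  "sgnl xs R = (-1) ^ card (R \<inter> Bs xs)"

lemma Bs_sub: "Bs xs \<subseteq> set xs"
  by (induction xs rule: Bs.induct) auto

lemma cmp_cong: "R \<inter> set ys = R' \<inter> set ys \<Longrightarrow> cmp ys R = cmp ys R'"
proof (induction ys R rule: cmp.induct)
  case (1 a b ys R)
  have "R \<inter> {a,b} = R' \<inter> {a,b}" using 1(2) by auto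
  moreover have "R \<inter> set ys = R' \<inter> set ys" using 1(2) by auto
  ultimately show ?case using 1(1) by simp
qed auto

lemma sgnl_cong: "R \<inter> set ys = R' \<inter> set ys \<Longrightarrow> sgnl ys R = sgnl ys R'"
proof -
  assume "R \<inter> set ys = R' \<inter> set ys"
  then have "R \<inter> Bs ys = R' \<inter> Bs ys" using Bs_sub[of ys] by blast
  then show ?thesis by (simp add: sgnl_def)
qed

lemma finite_psx[simp]: "finite X \<Longrightarrow> finite (psx X r)"
  unfolding psx_def
  by (rule finite_subset[OF _ finite_lists_length_eq[of X "2*r"]]) auto

lemma psx_0[simp]: "psx X 0 = {[]}"
  by (auto simp: psx_def)

lemma psx_Suc:
  "psx X (Suc r) = (\<lambda>(a,b,ys). a#b#ys) ` (SIGMA a:X. SIGMA b:X-{a}. psx (X-{a,b}) r)"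
proof
  show "psx X (Suc r) \<subseteq> (\<lambda>(a,b,ys). a#b#ys) ` (SIGMA a:X. SIGMA b:X-{a}. psx (X-{a,b}) r)"
  proof
    fix xs assume xs: "xs \<in> psx X (Suc r)"
    then obtain a b ys where e: "xs = a#b#ys"
      by (cases xs rule: remdups_adj.cases) (auto simp: psx_def)
    show "xs \<in> (\<lambda>(a,b,ys). a#b#ys) ` (SIGMA a:X. SIGMA b:X-{a}. psx (X-{a,b}) r)"
      using xs unfolding e by (auto simp: psx_def image_iff intro!: bexI[of _ "(a,b,ys)"])
  qed
  show "(\<lambda>(a,b,ys). a#b#ys) ` (SIGMA a:X. SIGMA b:X-{a}. psx (X-{a,b}) r) \<subseteq> psx X (Suc r)"
    by (auto simp: psx_def)
qed

lemma sum_psx_Suc: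
  assumes "finite X"
  shows "(\<Sum>xs\<in>psx X (Suc r). h xs) = (\<Sum>a\<in>X. \<Sum>b\<in>X-{a}. \<Sum>ys\<in>psx (X-{a,b}) r. h (a#b#ys))"
proof -
  have inj: "inj_on (\<lambda>(a,b,ys). a#b#ys) (SIGMA a:X. SIGMA b:X-{a}. psx (X-{a,b}) r)"
    by (auto simp: inj_on_def)
  have "(\<Sum>xs\<in>psx X (Suc r). h xs) = (\<Sum>(a,b,ys)\<in>(SIGMA a:X. SIGMA b:X-{a}. psx (X-{a,b}) r). h (a#b#ys))"
    unfolding psx_Suc by (subst sum.reindex[OF inj]) (simp add: case_prod_unfold)
  also have "\<dots> = (\<Sum>a\<in>X. \<Sum>(b,ys)\<in>(SIGMA b:X-{a}. psx (X-{a,b}) r). h (a#b#ys))"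
    by (subst sum.Sigma[symmetric]) (use assms in \<open>auto intro!: finite_SigmaI\<close>)
  also have "\<dots> = (\<Sum>a\<in>X. \<Sum>b\<in>X-{a}. \<Sum>ys\<in>psx (X-{a,b}) r. h (a#b#ys))"
    by (rule sum.cong[OF refl], subst sum.Sigma[symmetric]) (use assms in auto)
  finally show ?thesis .
qed

lemma finite_comps[simp]: "finite X \<Longrightarrow> finite (comps X k xs)"
  unfolding comps_def by (rule finite_subset[of _ "Pow X"]) auto

lemma comps_0_Cons: "finite X \<Longrightarrow> comps X 0 (a#b#ys) = {}"
  by (auto simp: comps_def finite_subset)

lemma comps_Suc_eq:
  assumes X: "finite X" "a \<in> X" "b \<in> X" "a \<noteq> b" "set ys \<subseteq> X - {a,b}"
  shows "comps X (Suc k) (a#b#ys) = insert a ` comps (X-{a,b}) k ys \<union> insert b ` comps (X-{a,b}) k ys"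
proof (intro equalityI subsetI)
  fix R assume R: "R \<in> comps X (Suc k) (a#b#ys)"
  have fR: "finite R" using R X(1) by (auto simp: comps_def finite_subset)
  have c1: "card (R \<inter> {a,b}) = 1" and cy: "cmp ys R" and RX: "R \<subseteq> X" and cR: "card R = Suc k"
    using R by (auto simp: comps_def)
  have "(a \<in> R \<and> b \<notin> R) \<or> (b \<in> R \<and> a \<notin> R)"
  proof (rule ccontr)
    assume "\<not> ?thesis"
    then have "R \<inter> {a,b} = {} \<or> R \<inter> {a,b} = {a,b}" by blast
    with c1 X(4) show False by auto
  qed
  then show "R \<in> insert a ` comps (X-{a,b}) k ys \<union> insert b ` comps (X-{a,b}) k ys"
  proof
    assume ab: "a \<in> R \<and> b \<notin> R"
    have "cmp ys (R - {a})" using cy cmp_cong[of "R - {a}" ys R] X(5) by auto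
    moreover have "card (R - {a}) = k" using cR ab fR by simp
    ultimately have "R - {a} \<in> comps (X-{a,b}) k ys" using RX ab by (auto simp: comps_def)
    then show ?thesis using ab by (auto simp: image_iff insert_absorb intro!: bexI[of _ "R - {a}"])
  next
    assume ab: "b \<in> R \<and> a \<notin> R"
    have "cmp ys (R - {b})" using cy cmp_cong[of "R - {b}" ys R] X(5) by auto
    moreover have "card (R - {b}) = k" using cR ab fR by simp
    ultimately have "R - {b} \<in> comps (X-{a,b}) k ys" using RX ab by (auto simp: comps_def)
    then show ?thesis using ab by (auto simp: image_iff insert_absorb intro!: bexI[of _ "R - {b}"])
  qed
next
  fix R assume R: "R \<in> insert a ` comps (X-{a,b}) k ys \<union> insert b ` comps (X-{a,b}) k ys"
  then obtain R' where R': "R' \<in> comps (X-{a,b}) k ys" and "R = insert a R' \<or> R = insert b R'" by auto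
  moreover have fR': "finite R'" using R' X(1) by (auto simp: comps_def finite_subset)
  moreover have "cmp ys (insert a R')" "cmp ys (insert b R')"
    using R' cmp_cong[of "insert a R'" ys R'] cmp_cong[of "insert b R'" ys R'] X(5)
    by (auto simp: comps_def)
  moreover have R'X: "R' \<subseteq> X - {a,b}" "card R' = k" using R' by (auto simp: comps_def)
  moreover have "insert a R' \<inter> {a,b} = {a}" "insert b R' \<inter> {a,b} = {b}" "a \<notin> R'" "b \<notin> R'" using R'X(1) by auto
  ultimately show "R \<in> comps X (Suc k) (a#b#ys)"
    using X(2,3) unfolding comps_def by (elim disjE) (simp_all add: subset_iff card_insert_if)
qed

lemma sum_comps_Suc:
  assumes X: "finite X" "a \<in> X" "b \<in> X" "a \<noteq> b" "set ys \<subseteq> X - {a,b}"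
  shows "(\<Sum>R\<in>comps X (Suc k) (a#b#ys). h R) = (\<Sum>R\<in>comps (X-{a,b}) k ys. h (insert a R) + h (insert b R))"
proof -
  let ?C = "comps (X-{a,b}) k ys"
  have fC: "finite ?C" using X(1) by simp
  have sub: "\<And>R. R \<in> ?C \<Longrightarrow> a \<notin> R \<and> b \<notin> R" by (auto simp: comps_def)
  have inja: "inj_on (insert a) ?C" using sub by (intro inj_onI) (metis Diff_insert_absorb)
  have injb: "inj_on (insert b) ?C" using sub by (intro inj_onI) (metis Diff_insert_absorb)
  have disj: "insert a ` ?C \<inter> insert b ` ?C = {}" using sub X(4) by auto
  have "(\<Sum>R\<in>comps X (Suc k) (a#b#ys). h R) = (\<Sum>R\<in>insert a ` ?C. h R) + (\<Sum>R\<in>insert b ` ?C. h R)"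
    unfolding comps_Suc_eq[OF X] by (rule sum.union_disjoint) (use fC disj in auto)
  also have "\<dots> = (\<Sum>R\<in>?C. h (insert a R)) + (\<Sum>R\<in>?C. h (insert b R))"
    by (simp add: sum.reindex[OF inja] sum.reindex[OF injb])
  finally show ?thesis by (simp add: sum.distrib)
qed

lemma sum_Pow_insert:
  assumes "finite R" "a \<notin> R"
  shows "(\<Sum>S\<in>Pow (insert a R). c S) = (\<Sum>S\<in>Pow R. c S) + (\<Sum>S\<in>Pow R. c (insert a S))"
proof -
  have inj: "inj_on (insert a) (Pow R)" using assms(2)
    by (intro inj_onI) (metis Diff_insert_absorb PowD subset_iff)
  have "(\<Sum>S\<in>Pow (insert a R). c S) = (\<Sum>S\<in>Pow R. c S) + (\<Sum>S\<in>insert a ` Pow R. c S)"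
    unfolding Pow_insert by (rule sum.union_disjoint) (use assms in auto)
  also have "(\<Sum>S\<in>insert a ` Pow R. c S) = (\<Sum>S\<in>Pow R. c (insert a S))"
    by (simp add: sum.reindex[OF inj])
  finally show ?thesis .
qed

lemma F_dd:
  assumes "finite R" "a \<notin> R" "b \<notin> R"
  shows "F c (insert a R) - F c (insert b R) = F (dd a b c) R"
  unfolding F_def dd_def using assms
  by (simp add: sum_Pow_insert sum_subtractf)

lemma harm_dd:
  assumes "finite X" "harmX X c" "a \<in> X" "b \<in> X" "a \<noteq> b"
  shows "harmX (X - {a,b}) (dd a b c)"
  unfolding harmX_def
proof (intro allI impI)
  fix T assume T: "T \<subseteq> X - {a,b}"
  let ?Y = "X - {a,b} - T"
  have fY: "finite ?Y" using assms(1) by simp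
  have e1: "X - insert a T = insert b ?Y" using T assms(3-5) by auto
  have e2: "X - insert b T = insert a ?Y" using T assms(3-5) by auto
  have h1: "(\<Sum>i\<in>X - insert a T. c (insert i (insert a T))) = 0"
  proof -
    have "insert a T \<subseteq> X" using T assms(3) by auto
    then show ?thesis using assms(2) unfolding harmX_def by blast
  qed
  have h2: "(\<Sum>i\<in>X - insert b T. c (insert i (insert b T))) = 0"
  proof -
    have "insert b T \<subseteq> X" using T assms(4) by auto
    then show ?thesis using assms(2) unfolding harmX_def by blast
  qed
  have bY: "b \<notin> ?Y" "a \<notin> ?Y" by auto
  from h1 have h1': "(\<Sum>i\<in>?Y. c (insert a (insert i T))) = - c (insert a (insert b T))"
    unfolding e1 using fY bY by (simp add: insert_commute)
  from h2 have h2': "(\<Sum>i\<in>?Y. c (insert b (insert i T))) = - c (insert a (insert b T))"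
    unfolding e2 using fY bY by (simp add: insert_commute)
  show "(\<Sum>i\<in>X - {a,b} - T. dd a b c (insert i T)) = 0"
    unfolding dd_def sum_subtractf h1' h2' by simp
qed

lemma D_neg: "D (\<lambda>T. - c T) ys = - D c ys"
proof (induction c ys rule: D.induct)
  case (1 c a b ys)
  have "dd a b (\<lambda>T. - c T) = (\<lambda>T. - dd a b c T)" by (auto simp: dd_def)
  then show ?case using 1 by simp
qed auto

lemma dd_swap: "dd b a c = (\<lambda>T. - dd a b c T)"
  by (auto simp: dd_def)


lemma card_supsets:
  assumes "finite X" "S \<subseteq> X" "card S \<le> k"
  shows "card {R \<in> sub X k. S \<subseteq> R} = (card X - card S) choose (k - card S)"
proof -
  have fS: "finite S" using assms finite_subset by blast
  have "bij_betw (\<lambda>R. R - S) {R \<in> sub X k. S \<subseteq> R} {T. T \<subseteq> X - S \<and> card T = k - card S}"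
  proof (rule bij_betw_byWitness[where f' = "\<lambda>T. T \<union> S"])
    show "\<forall>a\<in>{R \<in> sub X k. S \<subseteq> R}. a - S \<union> S = a" by auto
    show "\<forall>a'\<in>{T. T \<subseteq> X - S \<and> card T = k - card S}. a' \<union> S - S = a'" by auto
    show "(\<lambda>R. R - S) ` {R \<in> sub X k. S \<subseteq> R} \<subseteq> {T. T \<subseteq> X - S \<and> card T = k - card S}"
      using assms by (auto simp: sub_def card_Diff_subset finite_subset)
    show "(\<lambda>T. T \<union> S) ` {T. T \<subseteq> X - S \<and> card T = k - card S} \<subseteq> {R \<in> sub X k. S \<subseteq> R}"
    proof
      fix R assume "R \<in> (\<lambda>T. T \<union> S) ` {T. T \<subseteq> X - S \<and> card T = k - card S}"
      then obtain T where T: "T \<subseteq> X - S" "card T = k - card S" "R = T \<union> S" by auto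
      have "finite T" using T(1) assms(1) finite_subset by blast
      then have "card R = card T + card S" using T fS by (simp add: card_Un_disjoint disjoint_iff subset_iff)
      then show "R \<in> {R \<in> sub X k. S \<subseteq> R}" using T assms by (auto simp: sub_def)
    qed
  qed
  then have "card {R \<in> sub X k. S \<subseteq> R} = card {T. T \<subseteq> X - S \<and> card T = k - card S}"
    by (rule bij_betw_same_card)
  also have "\<dots> = card (X - S) choose (k - card S)"
    by (rule n_subsets) (use assms in simp)
  finally show ?thesis using assms by (simp add: card_Diff_subset fS)
qed


lemma base_I:
  assumes "finite X" "harmX X c"
  shows "(\<Sum>R\<in>sub X k. F c R) = real (card X choose k) * c {}"
proof -
  define phi where "phi w = (if w \<le> k then real ((card X - w) choose (k - w)) else 0)" for w
  have "(\<Sum>R\<in>sub X k. F c R) = (\<Sum>R\<in>sub X k. \<Sum>S\<in>{S. S \<in> Pow X \<and> S \<subseteq> R}. c S)"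
    unfolding F_def by (rule sum.cong) (auto simp: sub_def intro!: sum.cong)
  also have "\<dots> = (\<Sum>S\<in>Pow X. \<Sum>R\<in>{R. R \<in> sub X k \<and> S \<subseteq> R}. c S)"
    by (rule sum.swap_restrict) (use assms in auto)
  also have "\<dots> = (\<Sum>S\<in>Pow X. c S * phi (card S))"
  proof (rule sum.cong[OF refl])
    fix S assume S: "S \<in> Pow X"
    show "(\<Sum>R\<in>{R. R \<in> sub X k \<and> S \<subseteq> R}. c S) = c S * phi (card S)"
    proof (cases "card S \<le> k")
      case True
      then show ?thesis using card_supsets[OF assms(1) _ True] S by (simp add: phi_def)
    next
      case False
      have e: "{R. R \<in> sub X k \<and> S \<subseteq> R} = {}"
        using False assms(1) S by (auto simp: sub_def dest: card_mono[OF finite_subset])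
      show ?thesis unfolding e using False by (simp add: phi_def)
    qed
  qed
  also have "\<dots> = (\<Sum>w\<in>card ` Pow X. \<Sum>S\<in>{S \<in> Pow X. card S = w}. c S * phi (card S))"
    by (rule sum.image_gen) (use assms in simp)
  also have "\<dots> = (\<Sum>w\<in>card ` Pow X. if w = 0 then c {} * phi 0 else 0)"
  proof (rule sum.cong[OF refl])
    fix w assume "w \<in> card ` Pow X"
    show "(\<Sum>S\<in>{S \<in> Pow X. card S = w}. c S * phi (card S)) = (if w = 0 then c {} * phi 0 else 0)"
    proof (cases w)
      case 0
      have "{S \<in> Pow X. card S = 0} = {{}}" using assms(1) by (auto dest: finite_subset)
      then show ?thesis using 0 by simp
    next
      case (Suc v)
      have "(\<Sum>S\<in>{S \<in> Pow X. card S = w}. c S * phi (card S)) = (\<Sum>S\<in>sub X (Suc v). c S) * phi w"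
        unfolding sum_distrib_right using Suc by (intro sum.cong) (auto simp: sub_def)
      then show ?thesis using harm_level[OF assms, of v] Suc by simp
    qed
  qed
  also have "\<dots> = c {} * phi 0"
  proof -
    have "0 \<in> card ` Pow X" by (rule image_eqI[of _ _ "{}"]) auto
    then show ?thesis using assms(1) by (subst sum.delta) auto
  qed
  finally show ?thesis by (simp add: phi_def)
qed

lemma comps_Nil[simp]: "comps X k [] = sub X k"
  by (auto simp: comps_def sub_def)

lemma sgnl_Nil[simp]: "sgnl [] R = 1"
  by (simp add: sgnl_def)

lemma psx_SucE:
  assumes "xs \<in> psx X (Suc r)"
  obtains a b ys where "xs = a#b#ys" "a \<in> X" "b \<in> X" "a \<noteq> b" "ys \<in> psx (X - {a,b}) r"
  using assms unfolding psx_Suc by auto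

lemma psx_set: "ys \<in> psx Y r \<Longrightarrow> set ys \<subseteq> Y"
  by (simp add: psx_def)

lemma sgnl_ins_a:
  assumes "a \<noteq> b" "a \<notin> set ys" "b \<notin> R'"
  shows "sgnl (a#b#ys) (insert a R') = sgnl ys R'"
proof -
  have "insert a R' \<inter> insert b (Bs ys) = R' \<inter> Bs ys" using assms Bs_sub[of ys] by auto
  then show ?thesis by (simp add: sgnl_def)
qed

lemma sgnl_ins_b:
  assumes "finite R'" "b \<notin> R'"
  shows "sgnl (a#b#ys) (insert b R') = - sgnl ys R'"
proof -
  have "insert b R' \<inter> insert b (Bs ys) = insert b (R' \<inter> Bs ys)" by auto
  moreover have "card (insert b (R' \<inter> Bs ys)) = Suc (card (R' \<inter> Bs ys))" using assms by simp
  ultimately show ?thesis by (simp add: sgnl_def)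
qed

lemma thm_I:
  assumes "finite X" "xs \<in> psx X r" "harmX X c" "r \<le> k"
  shows "(\<Sum>R\<in>comps X k xs. sgnl xs R * F c R) = real ((card X - 2*r) choose (k - r)) * D c xs"
  using assms
proof (induction r arbitrary: X k c xs)
  case 0
  then have "xs = []" by simp
  then show ?case using base_I[OF 0(1,3), of k] by simp
next
  case (Suc r)
  obtain a b ys where xs: "xs = a#b#ys" "a \<in> X" "b \<in> X" "a \<noteq> b" and ys: "ys \<in> psx (X - {a,b}) r"
    using psx_SucE[OF Suc.prems(2)] by metis
  obtain k' where k: "k = Suc k'" using Suc.prems(4) by (cases k) auto
  have sy: "set ys \<subseteq> X - {a,b}" using psx_set[OF ys] .
  have "(\<Sum>R\<in>comps X k xs. sgnl xs R * F c R)
      = (\<Sum>R\<in>comps (X-{a,b}) k' ys. sgnl xs (insert a R) * F c (insert a R) + sgnl xs (insert b R) * F c (insert b R))"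
    unfolding k xs(1) by (rule sum_comps_Suc) (use Suc.prems(1) xs sy in auto)
  also have "\<dots> = (\<Sum>R\<in>comps (X-{a,b}) k' ys. sgnl ys R * F (dd a b c) R)"
  proof (rule sum.cong[OF refl])
    fix R assume R: "R \<in> comps (X-{a,b}) k' ys"
    have RX: "R \<subseteq> X - {a,b}" using R by (simp add: comps_def)
    have fR: "finite R" using RX Suc.prems(1) finite_subset by blast
    have "a \<notin> R" "b \<notin> R" "a \<notin> set ys" using RX sy by auto
    then show "sgnl xs (insert a R) * F c (insert a R) + sgnl xs (insert b R) * F c (insert b R) = sgnl ys R * F (dd a b c) R"
      unfolding xs(1) using sgnl_ins_a[of a b ys R] sgnl_ins_b[OF fR, of b a ys] F_dd[OF fR, of a b c] xs(4) sy
      by (auto simp: algebra_simps)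
  qed
  also have "\<dots> = real ((card (X-{a,b}) - 2*r) choose (k' - r)) * D (dd a b c) ys"
    by (rule Suc.IH) (use Suc.prems harm_dd[OF Suc.prems(1,3) xs(2,3,4)] ys k in auto)
  also have "card (X-{a,b}) = card X - 2" using xs Suc.prems(1) by (simp add: card_Diff_subset)
  finally show ?case using xs k by simp
qed

lemma card_comps:
  assumes "finite X" "xs \<in> psx X r" "r \<le> k"
  shows "card (comps X k xs) = 2 ^ r * ((card X - 2*r) choose (k - r))"
  using assms
proof (induction r arbitrary: X k xs)
  case 0
  then have "xs = []" by simp
  then show ?case using n_subsets[OF 0(1), of k] by (simp add: sub_def)
next
  case (Suc r)
  obtain a b ys where xs: "xs = a#b#ys" "a \<in> X" "b \<in> X" "a \<noteq> b" and ys: "ys \<in> psx (X - {a,b}) r"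
    using psx_SucE[OF Suc.prems(2)] by metis
  obtain k' where k: "k = Suc k'" using Suc.prems(3) by (cases k) auto
  have sy: "set ys \<subseteq> X - {a,b}" using psx_set[OF ys] .
  have "card (comps X k xs) = (\<Sum>R\<in>comps X k xs. 1)" by simp
  also have "\<dots> = (\<Sum>R\<in>comps (X-{a,b}) k' ys. 1 + 1)"
    unfolding k xs(1) by (rule sum_comps_Suc) (use Suc.prems(1) xs sy in auto)
  also have "\<dots> = 2 * card (comps (X-{a,b}) k' ys)" by simp
  also have "card (comps (X-{a,b}) k' ys) = 2 ^ r * ((card (X-{a,b}) - 2*r) choose (k' - r))"
    by (rule Suc.IH) (use Suc.prems ys k in auto)
  also have "card (X-{a,b}) = card X - 2" using xs Suc.prems(1) by (simp add: card_Diff_subset)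
  finally show ?case using xs k by simp
qed

lemma sum_split_pairs:
  fixes P :: "nat \<Rightarrow> nat \<Rightarrow> real"
  assumes "finite X" "R \<subseteq> X"
  shows "(\<Sum>a\<in>X. \<Sum>b\<in>X-{a}. if a \<in> R \<and> b \<notin> R then P a b else if b \<in> R \<and> a \<notin> R then P b a else 0)
       = 2 * (\<Sum>u\<in>R. \<Sum>v\<in>X-R. P u v)"
proof -
  have fR: "finite R" using assms finite_subset by blast
  have A: "(\<Sum>a\<in>X. \<Sum>b\<in>X-{a}. if a \<in> R \<and> b \<notin> R then P a b else 0) = (\<Sum>u\<in>R. \<Sum>v\<in>X-R. P u v)"
  proof -
    have "(\<Sum>a\<in>X. \<Sum>b\<in>X-{a}. if a \<in> R \<and> b \<notin> R then P a b else 0)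
        = (\<Sum>a\<in>X. if a \<in> R then (\<Sum>b\<in>X-R. P a b) else 0)"
    proof (rule sum.cong[OF refl])
      fix a assume a: "a \<in> X"
      show "(\<Sum>b\<in>X-{a}. if a \<in> R \<and> b \<notin> R then P a b else 0) = (if a \<in> R then (\<Sum>b\<in>X-R. P a b) else 0)"
      proof (cases "a \<in> R")
        case True
        have "(\<Sum>b\<in>X-{a}. if a \<in> R \<and> b \<notin> R then P a b else 0) = (\<Sum>b\<in>X-{a}. if b \<in> X - R then P a b else 0)"
          using True by (intro sum.cong) auto
        also have "\<dots> = (\<Sum>b\<in>(X-{a}) \<inter> (X-R). P a b)"
          by (rule sum.inter_restrict[symmetric]) (use assms in auto)
        also have "(X-{a}) \<inter> (X-R) = X - R" using True by auto
        finally show ?thesis using True by simp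
      qed simp
    qed
    also have "\<dots> = (\<Sum>a\<in>X \<inter> R. \<Sum>b\<in>X-R. P a b)"
      by (rule sum.inter_restrict[symmetric]) (use assms in auto)
    also have "X \<inter> R = R" using assms by auto
    finally show ?thesis .
  qed
  have B: "(\<Sum>a\<in>X. \<Sum>b\<in>X-{a}. if b \<in> R \<and> a \<notin> R then P b a else 0) = (\<Sum>u\<in>R. \<Sum>v\<in>X-R. P u v)"
  proof -
    have "(\<Sum>a\<in>X. \<Sum>b\<in>X-{a}. if b \<in> R \<and> a \<notin> R then P b a else 0)
        = (\<Sum>a\<in>X. \<Sum>b\<in>X. if b \<in> R \<and> a \<notin> R then P b a else 0)"
    proof (rule sum.cong[OF refl])
      fix a assume a: "a \<in> X"
      show "(\<Sum>b\<in>X-{a}. if b \<in> R \<and> a \<notin> R then P b a else 0) = (\<Sum>b\<in>X. if b \<in> R \<and> a \<notin> R then P b a else 0)"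
        by (rule sum.mono_neutral_left) (use assms in auto)
    qed
    also have "\<dots> = (\<Sum>b\<in>X. \<Sum>a\<in>X. if b \<in> R \<and> a \<notin> R then P b a else 0)"
      by (rule sum.swap)
    also have "\<dots> = (\<Sum>b\<in>X. \<Sum>a\<in>X-{b}. if b \<in> R \<and> a \<notin> R then P b a else 0)"
    proof (rule sum.cong[OF refl])
      fix b assume b: "b \<in> X"
      show "(\<Sum>a\<in>X. if b \<in> R \<and> a \<notin> R then P b a else 0) = (\<Sum>a\<in>X-{b}. if b \<in> R \<and> a \<notin> R then P b a else 0)"
        by (rule sum.mono_neutral_right) (use assms in auto)
    qed
    also have "\<dots> = (\<Sum>u\<in>R. \<Sum>v\<in>X-R. P u v)" by (rule A)
    finally show ?thesis .
  qed
  have "(\<Sum>a\<in>X. \<Sum>b\<in>X-{a}. if a \<in> R \<and> b \<notin> R then P a b else if b \<in> R \<and> a \<notin> R then P b a else 0)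
     = (\<Sum>a\<in>X. \<Sum>b\<in>X-{a}. (if a \<in> R \<and> b \<notin> R then P a b else 0) + (if b \<in> R \<and> a \<notin> R then P b a else 0))"
    by (intro sum.cong) auto
  also have "\<dots> = (\<Sum>a\<in>X. \<Sum>b\<in>X-{a}. if a \<in> R \<and> b \<notin> R then P a b else 0) + (\<Sum>a\<in>X. \<Sum>b\<in>X-{a}. if b \<in> R \<and> a \<notin> R then P b a else 0)"
    by (simp add: sum.distrib)
  finally show ?thesis using A B by simp
qed

lemma II_core:
  assumes X: "finite X" "R \<subseteq> X" "card R = k" "Suc r \<le> k" "harmX X c"
  shows "(\<Sum>u\<in>R. \<Sum>v\<in>X-R. G r (dd u v c) (R - {u})) = real (Suc r) * real (card X - r) * G (Suc r) c R"
proof -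
  have fR: "finite R" using X finite_subset by blast
  have kN: "k \<le> card X" using X card_mono by blast
  let ?H = "(\<Sum>T\<in>sub R r. \<Sum>i\<in>R - T. c (insert i T))"
  have H: "?H = real (Suc r) * G (Suc r) c R" unfolding G_def by (rule DC[OF fR])
  have "(\<Sum>u\<in>R. \<Sum>v\<in>X-R. G r (dd u v c) (R - {u}))
      = (\<Sum>u\<in>R. \<Sum>v\<in>X-R. \<Sum>T\<in>sub (R - {u}) r. c (insert u T))
        - (\<Sum>u\<in>R. \<Sum>v\<in>X-R. \<Sum>T\<in>sub (R - {u}) r. c (insert v T))"
    unfolding G_def dd_def by (simp add: sum_subtractf)
  also have "(\<Sum>u\<in>R. \<Sum>v\<in>X-R. \<Sum>T\<in>sub (R - {u}) r. c (insert u T))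
      = real (card (X - R)) * (\<Sum>u\<in>R. \<Sum>T\<in>sub (R - {u}) r. c (insert u T))"
    by (simp add: sum_distrib_left)
  also have "(\<Sum>u\<in>R. \<Sum>T\<in>sub (R - {u}) r. c (insert u T)) = ?H"
    by (rule SW[OF fR])
  also have "(\<Sum>u\<in>R. \<Sum>v\<in>X-R. \<Sum>T\<in>sub (R - {u}) r. c (insert v T))
      = (\<Sum>u\<in>R. \<Sum>T\<in>sub (R - {u}) r. \<Sum>v\<in>X-R. c (insert v T))"
    by (rule sum.cong[OF refl]) (rule sum.swap)
  also have "\<dots> = (\<Sum>T\<in>sub R r. \<Sum>u\<in>R - T. \<Sum>v\<in>X-R. c (insert v T))"
    by (rule SW[OF fR])
  also have "\<dots> = (\<Sum>T\<in>sub R r. real (k - r) * (- (\<Sum>i\<in>R - T. c (insert i T))))"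
  proof (rule sum.cong[OF refl])
    fix T assume T: "T \<in> sub R r"
    have TR: "T \<subseteq> R" "card T = r" using T by (auto simp: sub_def)
    have fT: "finite T" using TR fR finite_subset by blast
    have "(\<Sum>i\<in>X - T. c (insert i T)) = 0" using X(5) TR X(2) by (auto simp: harmX_def)
    moreover have "X - T = (X - R) \<union> (R - T)" using TR X(2) by auto
    moreover have "(\<Sum>i\<in>(X - R) \<union> (R - T). c (insert i T)) = (\<Sum>i\<in>X - R. c (insert i T)) + (\<Sum>i\<in>R - T. c (insert i T))"
      by (rule sum.union_disjoint) (use X(1) fR in auto)
    ultimately have e: "(\<Sum>v\<in>X - R. c (insert v T)) = - (\<Sum>i\<in>R - T. c (insert i T))" by simp
    have "card (R - T) = k - r" using TR fT X(3) by (simp add: card_Diff_subset)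
    then show "(\<Sum>u\<in>R - T. \<Sum>v\<in>X-R. c (insert v T)) = real (k - r) * (- (\<Sum>i\<in>R - T. c (insert i T)))"
      using e by simp
  qed
  also have "\<dots> = - (real (k - r) * ?H)"
    by (simp add: sum_distrib_left sum_negf)
  finally have "(\<Sum>u\<in>R. \<Sum>v\<in>X-R. G r (dd u v c) (R - {u})) = (real (card (X - R)) + real (k - r)) * ?H"
    by (simp add: algebra_simps)
  also have "real (card (X - R)) + real (k - r) = real (card X - r)"
    using X kN fR by (simp add: card_Diff_subset of_nat_diff)
  finally show ?thesis using H by simp
qed

fun kap :: "nat \<Rightarrow> nat \<Rightarrow> real" where
  "kap N 0 = 1"
| "kap N (Suc r) = 2 * real (Suc r) * real (N - r) * kap (N - 2) r"

definition Phi :: "nat set \<Rightarrow> nat \<Rightarrow> (nat set \<Rightarrow> real) \<Rightarrow> nat set \<Rightarrow> real" where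
  "Phi X r c R = (\<Sum>xs\<in>psx X r. if cmp xs R then sgnl xs R * D c xs else 0)"

lemma sub_0: "finite R \<Longrightarrow> sub R 0 = {{}}"
  by (auto simp: sub_def finite_subset)

lemma thm_II:
  assumes "finite X" "R \<subseteq> X" "card R = k" "r \<le> k" "harmX X c"
  shows "Phi X r c R = kap (card X) r * G r c R"
  using assms
proof (induction r arbitrary: X k c R)
  case 0
  have "finite R" using 0 finite_subset by blast
  then show ?case by (simp add: Phi_def G_def sub_0)
next
  case (Suc r)
  note fX = Suc.prems(1)
  have fR: "finite R" using Suc.prems finite_subset by blast
  obtain k' where k: "k = Suc k'" using Suc.prems(4) by (cases k) auto
  define P where "P u v = G r (dd u v c) (R - {u})" for u v
  have "Phi X (Suc r) c R = (\<Sum>a\<in>X. \<Sum>b\<in>X-{a}. \<Sum>ys\<in>psx (X-{a,b}) r.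
      if cmp (a#b#ys) R then sgnl (a#b#ys) R * D c (a#b#ys) else 0)"
    unfolding Phi_def by (rule sum_psx_Suc[OF fX])
  also have "\<dots> = (\<Sum>a\<in>X. \<Sum>b\<in>X-{a}. kap (card X - 2) r *
      (if a \<in> R \<and> b \<notin> R then P a b else if b \<in> R \<and> a \<notin> R then P b a else 0))"
  proof (intro sum.cong[OF refl])
    fix a b assume a: "a \<in> X" and b: "b \<in> X - {a}"
    have cX: "card (X - {a,b}) = card X - 2" using a b fX by (simp add: card_Diff_subset)
    have harm: "harmX (X - {a,b}) (dd a b c)" "harmX (X - {a,b}) (dd b a c)"
      using harm_dd[OF fX Suc.prems(5), of a b] harm_dd[OF fX Suc.prems(5), of b a] a b
      by (auto simp: insert_commute)
    have ys_set: "\<And>ys. ys \<in> psx (X-{a,b}) r \<Longrightarrow> a \<notin> set ys \<and> b \<notin> set ys"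
      using psx_set by blast
    show "(\<Sum>ys\<in>psx (X-{a,b}) r. if cmp (a#b#ys) R then sgnl (a#b#ys) R * D c (a#b#ys) else 0)
       = kap (card X - 2) r * (if a \<in> R \<and> b \<notin> R then P a b else if b \<in> R \<and> a \<notin> R then P b a else 0)"
    proof (cases "a \<in> R \<and> b \<notin> R")
      case True
      have RR: "R = insert a (R - {a})" using True by auto
      have "(\<Sum>ys\<in>psx (X-{a,b}) r. if cmp (a#b#ys) R then sgnl (a#b#ys) R * D c (a#b#ys) else 0)
          = Phi (X - {a,b}) r (dd a b c) (R - {a})"
        unfolding Phi_def
      proof (rule sum.cong[OF refl])
        fix ys assume ys: "ys \<in> psx (X-{a,b}) r"
        have "card (R \<inter> {a,b}) = 1" using True by (simp add: Int_insert_right)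
        moreover have "cmp ys R = cmp ys (R - {a})" using ys_set[OF ys] by (intro cmp_cong) auto
        moreover have "sgnl (a#b#ys) R = sgnl ys (R - {a})"
          using sgnl_ins_a[of a b ys "R - {a}"] True ys_set[OF ys] b RR by auto
        ultimately show "(if cmp (a#b#ys) R then sgnl (a#b#ys) R * D c (a#b#ys) else 0)
            = (if cmp ys (R - {a}) then sgnl ys (R - {a}) * D (dd a b c) ys else 0)" by simp
      qed
      also have "\<dots> = kap (card X - 2) r * G r (dd a b c) (R - {a})"
        using Suc.IH[of "X - {a,b}" "R - {a}" k' "dd a b c"] Suc.prems True fR k harm cX a b
        by (auto simp: card_Diff_singleton)
      finally show ?thesis using True by (simp add: P_def)
    next
      case F1: False
      show ?thesis
      proof (cases "b \<in> R \<and> a \<notin> R")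
        case True
        have RR: "R = insert b (R - {b})" using True by auto
        have "(\<Sum>ys\<in>psx (X-{a,b}) r. if cmp (a#b#ys) R then sgnl (a#b#ys) R * D c (a#b#ys) else 0)
            = Phi (X - {a,b}) r (dd b a c) (R - {b})"
          unfolding Phi_def
        proof (rule sum.cong[OF refl])
          fix ys assume ys: "ys \<in> psx (X-{a,b}) r"
          have "card (R \<inter> {a,b}) = 1" using True by (simp add: Int_insert_right)
          moreover have "cmp ys R = cmp ys (R - {b})" using ys_set[OF ys] by (intro cmp_cong) auto
          moreover have "sgnl (a#b#ys) R = - sgnl ys (R - {b})"
            using sgnl_ins_b[of "R - {b}" b a ys] fR RR by auto
          moreover have "D (dd a b c) ys = - D (dd b a c) ys"
            using D_neg[of "dd b a c" ys] by (simp add: dd_swap[of a b c])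
          ultimately show "(if cmp (a#b#ys) R then sgnl (a#b#ys) R * D c (a#b#ys) else 0)
              = (if cmp ys (R - {b}) then sgnl ys (R - {b}) * D (dd b a c) ys else 0)" by simp
        qed
        also have "\<dots> = kap (card X - 2) r * G r (dd b a c) (R - {b})"
          using Suc.IH[of "X - {a,b}" "R - {b}" k' "dd b a c"] Suc.prems True fR k harm cX a b
          by (auto simp: card_Diff_singleton)
        finally show ?thesis using True F1 by (simp add: P_def)
      next
        case False
        have "card (R \<inter> {a,b}) \<noteq> 1"
        proof -
          have "R \<inter> {a,b} = {} \<or> R \<inter> {a,b} = {a,b}" using F1 False by auto
          then show ?thesis using b by auto
        qed
        then show ?thesis using F1 False by auto
      qed
    qed
  qed
  also have "\<dots> = kap (card X - 2) r * (2 * (\<Sum>u\<in>R. \<Sum>v\<in>X-R. P u v))"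
    by (simp add: sum_distrib_left[symmetric] sum_split_pairs[OF fX Suc.prems(2)])
  also have "(\<Sum>u\<in>R. \<Sum>v\<in>X-R. P u v) = real (Suc r) * real (card X - r) * G (Suc r) c R"
    unfolding P_def by (rule II_core) (use Suc.prems in auto)
  finally show ?case by simp
qed

fun Mf :: "nat \<Rightarrow> nat \<Rightarrow> nat" where
  "Mf N 0 = 1"
| "Mf N (Suc r) = N * (N - 1) * Mf (N - 2) r"

lemma card_psx: "finite X \<Longrightarrow> card (psx X r) = Mf (card X) r"
proof (induction r arbitrary: X)
  case 0
  then show ?case by simp
next
  case (Suc r)
  have "card (psx X (Suc r)) = (\<Sum>xs\<in>psx X (Suc r). 1)" by simp
  also have "\<dots> = (\<Sum>a\<in>X. \<Sum>b\<in>X-{a}. \<Sum>ys\<in>psx (X-{a,b}) r. 1)"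
    by (rule sum_psx_Suc[OF Suc.prems])
  also have "\<dots> = (\<Sum>a\<in>X. \<Sum>b\<in>X-{a}. Mf (card X - 2) r)"
  proof (intro sum.cong[OF refl])
    fix a b assume "a \<in> X" "b \<in> X - {a}"
    then have "card (X - {a,b}) = card X - 2" using Suc.prems by (simp add: card_Diff_subset)
    then show "(\<Sum>ys\<in>psx (X-{a,b}) r. 1) = Mf (card X - 2) r"
      using Suc.IH[of "X - {a,b}"] Suc.prems by simp
  qed
  also have "\<dots> = card X * (card X - 1) * Mf (card X - 2) r"
    using Suc.prems by simp
  finally show ?case by simp
qed

lemma Mf_pos: "2 * r \<le> N \<Longrightarrow> Mf N r > 0"
  by (induction r arbitrary: N) auto

lemma kap_pos: "2 * r \<le> N \<Longrightarrow> kap N r > 0"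
  by (induction r arbitrary: N) auto

lemma kap_nonneg: "kap N r \<ge> 0"
  by (induction r arbitrary: N) auto

lemma ineq:
  assumes "r \<le> k" "2 * k \<le> N"
  shows "real ((N - 2*r) choose (k - r)) * real (Mf N r) \<le> real (k choose r) * real (N choose k) * kap N r"
  using assms
proof (induction r arbitrary: N k)
  case 0
  then show ?case by simp
next
  case (Suc r)
  obtain k' where k: "k = Suc k'" using Suc.prems by (cases k) auto
  define N' where "N' = N - 2"
  have NN: "N = Suc (Suc N')" using Suc.prems k N'_def by auto
  have IH: "real ((N' - 2*r) choose (k' - r)) * real (Mf N' r) \<le> real (k' choose r) * real (N' choose k') * kap N' r"
    by (rule Suc.IH) (use Suc.prems k NN in auto)
  define Lf where "Lf = real (k' choose r) * real (N' choose k') * real N * real (N - 1)"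
  have i1: "(k choose Suc r) * Suc r = k * (k' choose r)"
    using Suc_times_binomial_eq[of k' r] k by simp
  have i2: "(N choose k) * k = N * ((N - 1) choose k')"
    using Suc_times_binomial_eq[of "N - 1" k'] k NN by simp
  have i3: "(N - 1 - k') * ((N - 1) choose k') = (N - 1) * (N' choose k')"
    using binomial_absorb_comp[of "N - 1" k'] NN by simp
  have kpos: "real k * real (N - k) > 0" using Suc.prems k by auto
  have eq: "real (k choose Suc r) * real (N choose k) * (2 * real (Suc r) * real (N - r)) * (real k * real (N - k))
      = 2 * real (N - r) * real k * Lf"
  proof -
    have "real (k choose Suc r) * real (N choose k) * (2 * real (Suc r) * real (N - r)) * (real k * real (N - k))
        = 2 * real (N - r) * (real ((k choose Suc r) * Suc r)) * (real ((N choose k) * k)) * real (N - k)"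
      by (simp add: algebra_simps)
    also have "\<dots> = 2 * real (N - r) * real (k * (k' choose r)) * real (N * ((N - 1) choose k')) * real (N - k)"
      by (simp only: i1 i2)
    also have "\<dots> = 2 * real (N - r) * real k * real (k' choose r) * real N * real ((N - 1 - k') * ((N - 1) choose k'))"
    proof -
      have hk: "N - k = N - 1 - k'" using k by simp
      show ?thesis unfolding hk of_nat_mult by (simp only: mult_ac)
    qed
    also have "\<dots> = 2 * real (N - r) * real k * Lf"
      unfolding i3 Lf_def of_nat_mult by (simp only: mult_ac)
    finally show ?thesis .
  qed
  have le1: "Lf \<le> real (k choose Suc r) * real (N choose k) * (2 * real (Suc r) * real (N - r))"
  proof -
    have "Lf * (real k * real (N - k)) \<le> 2 * real (N - r) * real k * Lf"
    proof -
      have "real (N - k) \<le> 2 * real (N - r)" using Suc.prems by auto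
      moreover have "Lf \<ge> 0" by (simp add: Lf_def)
      ultimately show ?thesis
        by (metis mult.commute mult.left_commute mult_left_mono of_nat_0_le_iff)
    qed
    then have "Lf * (real k * real (N - k)) \<le> real (k choose Suc r) * real (N choose k) * (2 * real (Suc r) * real (N - r)) * (real k * real (N - k))"
      unfolding eq by assumption
    then show ?thesis by (rule mult_right_le_imp_le[OF _ kpos])
  qed
  have "real ((N - 2 * Suc r) choose (k - Suc r)) * real (Mf N (Suc r))
      = (real ((N' - 2*r) choose (k' - r)) * real (Mf N' r)) * (real N * real (N - 1))"
    using NN k by (simp add: N'_def algebra_simps)
  also have "\<dots> \<le> (real (k' choose r) * real (N' choose k') * kap N' r) * (real N * real (N - 1))"
    by (rule mult_right_mono[OF IH]) simp
  also have "\<dots> = Lf * kap N' r" by (simp add: Lf_def algebra_simps)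
  also have "\<dots> \<le> (real (k choose Suc r) * real (N choose k) * (2 * real (Suc r) * real (N - r))) * kap N' r"
    by (rule mult_right_mono[OF le1 kap_nonneg])
  also have "\<dots> = real (k choose Suc r) * real (N choose k) * kap N (Suc r)"
    using NN by (simp add: N'_def algebra_simps)
  finally show ?case .
qed

lemma D_cong: "(\<And>T. T \<subseteq> set xs \<Longrightarrow> c T = c' T) \<Longrightarrow> D c xs = D c' xs"
proof (induction c xs arbitrary: c' rule: D.induct)
  case (1 c a b ys)
  have "D (dd a b c) ys = D (dd a b c') ys"
  proof (rule 1(1))
    fix T assume T: "T \<subseteq> set ys"
    have "c (insert a T) = c' (insert a T)" "c (insert b T) = c' (insert b T)"
      using T by (auto intro!: 1(2))
    then show "dd a b c T = dd a b c' T" by (simp add: dd_def)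
  qed
  then show ?case by simp
next
  case ("2_1" c)
  then show ?case by simp
next
  case ("2_2" c v)
  then show ?case by simp
qed

lemma D_hom: "length xs = 2 * r \<Longrightarrow> distinct xs \<Longrightarrow> D (hom_part r c) xs = D c xs"
proof (induction r arbitrary: c xs)
  case 0
  then show ?case by (simp add: hom_part_def)
next
  case (Suc r)
  obtain a b ys where xs: "xs = a#b#ys" using Suc.prems(1)
    by (cases xs rule: remdups_adj.cases) auto
  have ys: "length ys = 2 * r" "distinct ys" "a \<notin> set ys" "b \<notin> set ys" "a \<noteq> b"
    using Suc.prems xs by auto
  have "D (dd a b (hom_part (Suc r) c)) ys = D (hom_part r (dd a b c)) ys"
  proof (rule D_cong)
    fix T assume T: "T \<subseteq> set ys"
    then have "finite T" "a \<notin> T" "b \<notin> T" using ys finite_subset by auto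
    then show "dd a b (hom_part (Suc r) c) T = hom_part r (dd a b c) T"
      by (simp add: dd_def hom_part_def)
  qed
  also have "\<dots> = D (dd a b c) ys" by (rule Suc.IH) (use ys in auto)
  finally show ?case using xs by simp
qed

lemma poly_on_slice_F:
  assumes "R \<subseteq> {..<n}"
  shows "poly_on_slice n c R = F c R"
proof -
  have "poly_on_slice n c R = (\<Sum>S\<in>Pow {..<n}. if S \<subseteq> R then c S else 0)"
    unfolding poly_on_slice_def mlpoly_eval_def
  proof (rule sum.cong[OF refl])
    fix S assume S: "S \<in> Pow {..<n}"
    have fS: "finite S" using S finite_subset by auto
    show "c S * (\<Prod>i\<in>S. if i \<in> R then 1 else 0) = (if S \<subseteq> R then c S else 0)"
    proof (cases "S \<subseteq> R")
      case True
      then have "(\<Prod>i\<in>S. if i \<in> R then 1 else (0::real)) = 1" by (intro prod.neutral) auto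
      then show ?thesis using True by simp
    next
      case False
      then obtain i where "i \<in> S" "i \<notin> R" by auto
      then have "(\<Prod>i\<in>S. if i \<in> R then 1 else (0::real)) = 0" using fS
        by (intro prod_zero) auto
      then show ?thesis using False by simp
    qed
  qed
  also have "\<dots> = (\<Sum>S\<in>{S \<in> Pow {..<n}. S \<subseteq> R}. c S)"
    by (rule sum.inter_filter[symmetric]) simp
  also have "{S \<in> Pow {..<n}. S \<subseteq> R} = Pow R" using assms by auto
  finally show ?thesis by (simp add: F_def)
qed

lemma F_hom: "finite R \<Longrightarrow> F (hom_part r c) R = G r c R"
proof -
  assume fR: "finite R"
  have "F (hom_part r c) R = (\<Sum>S\<in>Pow R. if card S = r then c S else 0)"
    by (simp add: F_def hom_part_def)
  also have "\<dots> = (\<Sum>S\<in>{S \<in> Pow R. card S = r}. c S)"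
    by (rule sum.inter_filter[symmetric]) (use fR in simp)
  also have "{S \<in> Pow R. card S = r} = sub R r" by (auto simp: sub_def)
  finally show ?thesis by (simp add: G_def)
qed

lemma G_hom: "G r (hom_part r c) R = G r c R"
  by (auto simp: G_def hom_part_def sub_def intro!: sum.cong)

lemma harm_conv:
  assumes "harmonic n c"
  shows "harmX {..<n} c"
  unfolding harmX_def
proof (intro allI impI)
  fix T assume T: "T \<subseteq> {..<n}"
  have "(\<Sum>i<n. mlpoly_deriv i c T) = 0" using assms T by (auto simp: harmonic_def)
  moreover have "(\<Sum>i<n. mlpoly_deriv i c T) = (\<Sum>i\<in>{i \<in> {..<n}. i \<notin> T}. c (insert i T))"
    unfolding mlpoly_deriv_def by (rule sum.inter_filter[symmetric]) simp
  moreover have "{i \<in> {..<n}. i \<notin> T} = {..<n} - T" by auto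
  ultimately show "(\<Sum>i\<in>{..<n} - T. c (insert i T)) = 0" by simp
qed

lemma harm_hom:
  assumes "finite X" "harmX X c"
  shows "harmX X (hom_part r c)"
  unfolding harmX_def
proof (intro allI impI)
  fix T assume T: "T \<subseteq> X"
  have fT: "finite T" using T assms finite_subset by blast
  have "(\<Sum>i\<in>X - T. hom_part r c (insert i T)) = (\<Sum>i\<in>X - T. if Suc (card T) = r then c (insert i T) else 0)"
    using fT by (intro sum.cong) (auto simp: hom_part_def)
  also have "\<dots> = 0" using assms T by (cases "Suc (card T) = r") (auto simp: harmX_def)
  finally show "(\<Sum>i\<in>X - T. hom_part r c (insert i T)) = 0" .
qed

lemma cmp_nth: "length xs = 2 * r \<Longrightarrow> cmp xs R = (\<forall>i<r. card (R \<inter> {xs ! (2*i), xs ! (2*i+1)}) = 1)"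
proof (induction r arbitrary: xs)
  case 0
  then show ?case by simp
next
  case (Suc r)
  obtain a b ys where xs: "xs = a#b#ys" using Suc.prems
    by (cases xs rule: remdups_adj.cases) auto
  have ly: "length ys = 2 * r" using Suc.prems xs by simp
  have "(\<forall>i<Suc r. card (R \<inter> {xs ! (2*i), xs ! (2*i+1)}) = 1)
      = (card (R \<inter> {a,b}) = 1 \<and> (\<forall>i<r. card (R \<inter> {ys ! (2*i), ys ! (2*i+1)}) = 1))"
    unfolding xs All_less_Suc2 by simp
  then show ?case using Suc.IH[OF ly] xs by simp
qed

lemma Bs_nth: "length xs = 2 * r \<Longrightarrow> {xs ! (2*i+1) | i. i < r} = Bs xs"
proof (induction r arbitrary: xs)
  case 0
  then show ?case by simp
next
  case (Suc r)
  obtain a b ys where xs: "xs = a#b#ys" using Suc.prems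
    by (cases xs rule: remdups_adj.cases) auto
  have ly: "length ys = 2 * r" using Suc.prems xs by simp
  have "{xs ! (2*i+1) | i. i < Suc r} = insert b {ys ! (2*i+1) | i. i < r}"
  proof (intro equalityI subsetI)
    fix x assume "x \<in> {xs ! (2*i+1) | i. i < Suc r}"
    then obtain i where i: "i < Suc r" "x = xs ! (2*i+1)" by auto
    show "x \<in> insert b {ys ! (2*i+1) | i. i < r}"
    proof (cases i)
      case 0 then show ?thesis using i xs by simp
    next
      case (Suc j) then show ?thesis using i xs by auto
    qed
  next
    fix x assume "x \<in> insert b {ys ! (2*i+1) | i. i < r}"
    then show "x \<in> {xs ! (2*i+1) | i. i < Suc r}"
    proof
      assume "x = b" then show ?thesis using xs by (auto intro!: exI[of _ 0])
    next
      assume "x \<in> {ys ! (2*i+1) | i. i < r}"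
      then obtain j where "j < r" "x = ys ! (2*j+1)" by auto
      then show ?thesis using xs by (auto intro!: exI[of _ "Suc j"])
    qed
  qed
  then show ?case using Suc.IH[OF ly] xs by simp
qed

theorem lemma2p12:
  fixes n k r :: nat and c :: "nat set \<Rightarrow> real"
  assumes "2 * r \<le> 2 * k" and "2 * k \<le> n"
    and "harmonic n c"
  shows "slice_norm_sq n k (poly_on_slice n (hom_part r c))
           \<le> 4 ^ r * real (k choose r) * (level_weight n k r (poly_on_slice n c))\<^sup>2"
proof -
  define X where "X = {..<n}"
  have fX: "finite X" and cX: "card X = n" by (auto simp: X_def)
  have rk: "r \<le> k" using assms(1) by simp
  have hX: "harmX X c" using harm_conv[OF assms(3)] by (simp add: X_def)
  define hc where "hc = hom_part r c"
  have hH: "harmX X hc" unfolding hc_def by (rule harm_hom[OF fX hX])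
  define C where "C = real ((n - 2*r) choose (k - r))"
  define K where "K = real (n choose k)"
  define M where "M = real (Mf n r)"
  define kp where "kp = kap n r"
  define S where "S = (\<Sum>xs\<in>psx X r. (D c xs)^2)"
  have Cpos: "C > 0" unfolding C_def using assms by (simp add: zero_less_binomial_iff)
  have Kpos: "K > 0" unfolding K_def using assms by (simp add: zero_less_binomial_iff)
  have Mpos: "M > 0" unfolding M_def using Mf_pos[of r n] assms by simp
  have kpos: "kp > 0" unfolding kp_def using kap_pos[of r n] assms by simp
  have Snn: "S \<ge> 0" unfolding S_def by (simp add: sum_nonneg)
  have sl: "slice n k = sub X k" by (simp add: slice_def sub_def X_def)
  have cardsl: "real (card (slice n k)) = K"
    unfolding sl K_def sub_def using n_subsets[OF fX, of k] cX by simp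
  have ps: "pair_seqs n r = psx X r" by (simp add: pair_seqs_def psx_def X_def)
  have cardps: "real (card (pair_seqs n r)) = M" unfolding ps M_def using card_psx[OF fX] cX by simp
  have subX: "\<And>R. R \<in> sub X k \<Longrightarrow> R \<subseteq> {..<n} \<and> finite R"
    by (auto simp: sub_def X_def finite_subset)
  have Dh: "\<And>xs. xs \<in> psx X r \<Longrightarrow> D hc xs = D c xs"
    unfolding hc_def by (rule D_hom) (auto simp: psx_def)
  have L1: "slice_norm_sq n k (poly_on_slice n hc) = (\<Sum>R\<in>sub X k. (G r c R)^2) / K"
    unfolding slice_norm_sq_def cardsl unfolding sl
    by (rule arg_cong[where f = "\<lambda>x. x / K"], rule sum.cong[OF refl])
       (simp add: poly_on_slice_F subX F_hom hc_def)
  have L2: "(\<Sum>R\<in>sub X k. (G r c R)^2) = C / kp * S"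
  proof -
    have "(\<Sum>R\<in>sub X k. (G r c R)^2) = (\<Sum>R\<in>sub X k. G r c R * Phi X r hc R / kp)"
    proof (rule sum.cong[OF refl])
      fix R assume R: "R \<in> sub X k"
      have "Phi X r hc R = kp * G r hc R" unfolding kp_def cX[symmetric]
        by (rule thm_II[OF fX _ _ rk hH]) (use R in \<open>auto simp: sub_def\<close>)
      then show "(G r c R)^2 = G r c R * Phi X r hc R / kp"
        using kpos by (simp add: hc_def G_hom power2_eq_square)
    qed
    also have "\<dots> = (1 / kp) * (\<Sum>R\<in>sub X k. \<Sum>xs\<in>psx X r. if cmp xs R then sgnl xs R * D hc xs * G r c R else 0)"
      unfolding Phi_def sum_distrib_left sum_divide_distrib by (intro sum.cong refl) auto
    also have "(\<Sum>R\<in>sub X k. \<Sum>xs\<in>psx X r. if cmp xs R then sgnl xs R * D hc xs * G r c R else 0)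
        = (\<Sum>xs\<in>psx X r. \<Sum>R\<in>sub X k. if cmp xs R then sgnl xs R * D hc xs * G r c R else 0)"
      by (rule sum.swap)
    also have "\<dots> = (\<Sum>xs\<in>psx X r. C * (D c xs)^2)"
    proof (rule sum.cong[OF refl])
      fix xs assume xs: "xs \<in> psx X r"
      have "(\<Sum>R\<in>sub X k. if cmp xs R then sgnl xs R * D hc xs * G r c R else 0)
          = (\<Sum>R\<in>{R \<in> sub X k. cmp xs R}. sgnl xs R * D hc xs * G r c R)"
        by (rule sum.inter_filter[symmetric]) (simp add: fX)
      also have "{R \<in> sub X k. cmp xs R} = comps X k xs" by (auto simp: sub_def comps_def)
      also have "(\<Sum>R\<in>comps X k xs. sgnl xs R * D hc xs * G r c R) = D hc xs * (\<Sum>R\<in>comps X k xs. sgnl xs R * F hc R)"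
        unfolding sum_distrib_left
      proof (rule sum.cong[OF refl])
        fix R assume "R \<in> comps X k xs"
        then have "finite R" using fX by (auto simp: comps_def finite_subset)
        then show "sgnl xs R * D hc xs * G r c R = D hc xs * (sgnl xs R * F hc R)"
          by (simp add: hc_def F_hom)
      qed
      also have "(\<Sum>R\<in>comps X k xs. sgnl xs R * F hc R) = C * D hc xs"
        unfolding C_def cX[symmetric] by (rule thm_I[OF fX xs hH rk])
      finally show "(\<Sum>R\<in>sub X k. if cmp xs R then sgnl xs R * D hc xs * G r c R else 0) = C * (D c xs)^2"
        using Dh[OF xs] by (simp add: power2_eq_square)
    qed
    finally show ?thesis by (simp add: S_def sum_distrib_left)
  qed
  have R1: "(level_weight n k r (poly_on_slice n c))^2 = S / (4 ^ r * M)"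
  proof -
    have inner: "(\<Sum>R\<in>compatible_sets n k r xs. (-1) ^ card (R \<inter> {xs ! (2*i+1) | i. i < r}) * poly_on_slice n c R)
        / real (card (compatible_sets n k r xs)) = D c xs / 2 ^ r" if xs: "xs \<in> psx X r" for xs
    proof -
      have len: "length xs = 2 * r" using xs by (simp add: psx_def)
      have cs: "compatible_sets n k r xs = comps X k xs"
        unfolding compatible_sets_def comps_def slice_def X_def cmp_nth[OF len] by auto
      have "(\<Sum>R\<in>compatible_sets n k r xs. (-1) ^ card (R \<inter> {xs ! (2*i+1) | i. i < r}) * poly_on_slice n c R)
          = (\<Sum>R\<in>comps X k xs. sgnl xs R * F c R)"
        unfolding cs Bs_nth[OF len] sgnl_def
        by (rule sum.cong[OF refl]) (auto simp: comps_def X_def poly_on_slice_F)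
      also have "\<dots> = C * D c xs"
        unfolding C_def cX[symmetric] by (rule thm_I[OF fX xs hX rk])
      finally show ?thesis
        unfolding cs card_comps[OF fX xs rk] cX using Cpos by (simp add: C_def)
    qed
    have "(\<Sum>xs\<in>pair_seqs n r. ((\<Sum>R\<in>compatible_sets n k r xs. (-1) ^ card (R \<inter> {xs ! (2*i+1) | i. i < r}) * poly_on_slice n c R)
        / real (card (compatible_sets n k r xs)))\<^sup>2) = (\<Sum>xs\<in>psx X r. (D c xs / 2 ^ r)^2)"
      unfolding ps by (rule sum.cong[OF refl]) (simp only: inner)
    also have "\<dots> = S / 4 ^ r"
    proof -
      have p4: "((2::real) ^ r)^2 = 4 ^ r" by (induction r) (auto simp: power2_eq_square)
      show ?thesis by (simp add: S_def sum_divide_distrib power_divide p4)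
    qed
    finally have e: "(\<Sum>xs\<in>pair_seqs n r. ((\<Sum>R\<in>compatible_sets n k r xs. (-1) ^ card (R \<inter> {xs ! (2*i+1) | i. i < r}) * poly_on_slice n c R)
        / real (card (compatible_sets n k r xs)))\<^sup>2) = S / 4 ^ r" .
    have "0 \<le> S / 4 ^ r / M" using Snn Mpos by simp
    then show ?thesis unfolding level_weight_def e cardps by simp
  qed
  have I: "C * M \<le> real (k choose r) * K * kp"
    unfolding C_def M_def K_def kp_def by (rule ineq[OF rk assms(2)])
  have "slice_norm_sq n k (poly_on_slice n (hom_part r c)) = C * S / (kp * K)"
    using L1 L2 by (simp add: hc_def)
  also have "\<dots> \<le> real (k choose r) * S / M"
  proof -
    have "C * M * S \<le> real (k choose r) * K * kp * S" by (rule mult_right_mono[OF I Snn])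
    then show ?thesis using Kpos Mpos kpos by (simp add: field_simps)
  qed
  also have "\<dots> = 4 ^ r * real (k choose r) * (level_weight n k r (poly_on_slice n c))\<^sup>2"
    unfolding R1 by simp
  finally show ?thesis .
qed

end
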